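(* Let $n\ge 2$ and let $A_1,\dots,A_{2n}$ be the vertices $\pm\mathbf e_1,\dots,\pm\mathbf e_n$ of the cross-polytope in $\mathbb R^n$ (where $\mathbf e_1,\dots,\mathbf e_n$ is the standard basis). Let $\Gamma$ be the sphere of radius $r>0$ centred at the origin $O$, let $E=\{\pm r\mathbf e_i: 1\le i\le n\}$ (the points where the rays $OA_j$ meet $\Gamma$) and $D=\{\tfrac{r}{\sqrt n}(\varepsilon_1,\dots,\varepsilon_n):\varepsilon_j\in\{1,-1\}\}$ (the points where the perpendiculars from $O$ to the facets of the cross-polytope meet $\Gamma$). Fix $h\ge0$ and put $C_n(M,\lambda)=\sum_{i=1}^{2n}(|MA_i|^2+h)^{\lambda/2}$ for $M\in\Gamma$. Then: (1) If $\lambda<0$: the minimum of $C_n(\cdot,\lambda)$ on $\Gamma$ is attained precisely at the points of $D$, and, unless $h=0$ and $r=1$ (in which case $C_n(\cdot,\lambda)$ is unbounded), the maximum is attained precisely at the points of $E$. (2) If $\lambda\in\{0,2,4,6\}$, $C_n(M,\lambda)$ is independent of $M\in\Gamma$; these are the only real $\lambda$ with this property. If $\lambda\in(0,2)\cup(4,6)$, the maximum is attained precisely at the points of $D$ and the minimum precisely at the points of $E$. If $\lambda\in(2,4)$, the minimum is attained precisely at the points of $D$ and the maximum precisely at the points of $E$. (3) If $\lambda>6$: the maximum is attained precisely at the points of $E$ and the minimum precisely at the points of $D$.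
   Context: $|MA|$ denotes Euclidean distance. *)

theory Defs
  imports "HOL-Analysis.Analysis"
begin

definition cross_vertices :: "(real ^ 'n) set" where
  "cross_vertices = {axis i 1 | i. True} \<union> {- axis i 1 | i. True}"

definition pw :: "real \<Rightarrow> real \<Rightarrow> real" where
  "pw b mu = (if b = 0 then (if mu = 0 then 1 else 0) else b powr mu)"

definition Cn :: "real \<Rightarrow> real \<Rightarrow> real ^ 'n \<Rightarrow> real" where
  "Cn h lam M = (\<Sum>A\<in>cross_vertices. pw ((dist M A)\<^sup>2 + h) (lam / 2))"

definition E_pts :: "real \<Rightarrow> (real ^ 'n) set" where
  "E_pts r = (\<lambda>A. r *\<^sub>R A) ` cross_vertices"

definition D_pts :: "real \<Rightarrow> (real ^ 'n) set" where
  "D_pts r = {x. \<forall>i. x $ i = r / sqrt (real CARD('n)) \<or> x $ i = - (r / sqrt (real CARD('n)))}"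

text \<open>Domain on which C_n is finite: the sphere, minus points M with |MA|^2 + h = 0
  (these exist only when h = 0 and r = 1, namely M a vertex).\<close>
definition dom_pts :: "real \<Rightarrow> real \<Rightarrow> (real ^ 'n) set" where
  "dom_pts r h = {M \<in> sphere 0 r. \<forall>A\<in>cross_vertices. (dist M A)\<^sup>2 + h > 0}"

definition argmin_on :: "('a \<Rightarrow> real) \<Rightarrow> 'a set \<Rightarrow> 'a set" where
  "argmin_on f S = {x \<in> S. \<forall>y\<in>S. f x \<le> f y}"

definition argmax_on :: "('a \<Rightarrow> real) \<Rightarrow> 'a set \<Rightarrow> 'a set" where
  "argmax_on f S = {x \<in> S. \<forall>y\<in>S. f y \<le> f x}"

end

theory Submission
  imports Defs
begin

lemma mvt':
  fixes f f' :: "real \<Rightarrow> real"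
  assumes "a < b" "continuous_on {a..b} f"
    "\<And>z. a < z \<Longrightarrow> z < b \<Longrightarrow> (f has_real_derivative f' z) (at z)"
  shows "\<exists>z. a < z \<and> z < b \<and> f b - f a = (b - a) * f' z"
proof -
  from MVT[OF assms(1,2)] assms(3) obtain l z where
    "a < z" "z < b" "DERIV f z :> l" "f b - f a = (b - a) * l"
    by (metis real_differentiable_def)
  moreover have "l = f' z" using DERIV_unique assms(3) calculation by blast
  ultimately show ?thesis by blast
qed

lemma chord_strict:
  fixes f f' :: "real \<Rightarrow> real"
  assumes "\<alpha> < x" "x < \<beta>" "continuous_on {\<alpha>..\<beta>} f"
    "\<And>z. \<alpha> < z \<Longrightarrow> z < \<beta> \<Longrightarrow> (f has_real_derivative f' z) (at z)"
    "\<And>z w. \<alpha> < z \<Longrightarrow> z < w \<Longrightarrow> w < \<beta> \<Longrightarrow> f' z < f' w"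
  shows "(f x - f \<alpha>) * (\<beta> - x) < (f \<beta> - f x) * (x - \<alpha>)"
proof -
  obtain z1 where z1: "\<alpha> < z1" "z1 < x" "f x - f \<alpha> = (x - \<alpha>) * f' z1"
    using mvt'[of \<alpha> x f f'] assms continuous_on_subset[OF assms(3)] by force
  obtain z2 where z2: "x < z2" "z2 < \<beta>" "f \<beta> - f x = (\<beta> - x) * f' z2"
    using mvt'[of x \<beta> f f'] assms continuous_on_subset[OF assms(3)] by force
  have "f' z1 < f' z2" using assms z1 z2 by auto
  hence "(x - \<alpha>) * (\<beta> - x) * f' z1 < (x - \<alpha>) * (\<beta> - x) * f' z2"
    using assms by (intro mult_strict_left_mono) auto
  moreover have "(f x - f \<alpha>) * (\<beta> - x) = (x - \<alpha>) * (\<beta> - x) * f' z1" using z1(3) by simp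
  moreover have "(f \<beta> - f x) * (x - \<alpha>) = (x - \<alpha>) * (\<beta> - x) * f' z2" using z2(3) by simp
  ultimately show ?thesis by linarith
qed

lemma tangent_strict:
  fixes f f' :: "real \<Rightarrow> real"
  assumes "\<alpha> \<le> x" "x \<le> \<beta>" "\<alpha> < c" "c < \<beta>" "x \<noteq> c" "continuous_on {\<alpha>..\<beta>} f"
    "\<And>z. \<alpha> < z \<Longrightarrow> z < \<beta> \<Longrightarrow> (f has_real_derivative f' z) (at z)"
    "\<And>z w. \<alpha> < z \<Longrightarrow> z < w \<Longrightarrow> w < \<beta> \<Longrightarrow> f' z < f' w"
  shows "f c + f' c * (x - c) < f x"
proof (cases "x < c")
  case True
  obtain z where z: "x < z" "z < c" "f c - f x = (c - x) * f' z"
    using mvt'[of x c f f'] assms True continuous_on_subset[OF assms(6)] by force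
  have "f' z < f' c" using assms z by auto
  hence "(c - x) * f' z < (c - x) * f' c" using True by simp
  thus ?thesis using z by (simp add: algebra_simps)
next
  case False
  hence F: "c < x" using assms by auto
  obtain z where z: "c < z" "z < x" "f x - f c = (x - c) * f' z"
    using mvt'[of c x f f'] assms F continuous_on_subset[OF assms(6)] by force
  have "f' c < f' z" using assms z by auto
  hence "(x - c) * f' c < (x - c) * f' z" using F by simp
  thus ?thesis using z by (simp add: algebra_simps)
qed

lemma deriv_incr:
  fixes f f' :: "real \<Rightarrow> real"
  assumes "\<And>z. \<alpha> < z \<Longrightarrow> z < \<beta> \<Longrightarrow> (f has_real_derivative f' z) (at z)"
    "\<And>z. \<alpha> < z \<Longrightarrow> z < \<beta> \<Longrightarrow> f' z > 0"
    "\<alpha> < x" "x < y" "y < \<beta>"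
  shows "f x < f y"
proof -
  have "continuous_on {x..y} f" using assms
    by (intro continuous_at_imp_continuous_on ballI DERIV_isCont) force
  then obtain z where "x < z" "z < y" "f y - f x = (y - x) * f' z"
    using mvt'[of x y f f'] assms by force
  moreover have "f' z > 0" using assms calculation by auto
  moreover have "(y - x) * f' z > 0" using calculation assms by simp
  ultimately show ?thesis by linarith
qed

definition uu :: "real \<Rightarrow> real \<Rightarrow> real \<Rightarrow> real" where
  "uu a m x = m * ((a + 2 * x) powr (m-1) - (a - 2 * x) powr (m-1))"
definition u1 :: "real \<Rightarrow> real \<Rightarrow> real \<Rightarrow> real" where
  "u1 a m x = 2*m*(m-1) * ((a + 2 * x) powr (m-2) + (a - 2 * x) powr (m-2))"
definition u2 :: "real \<Rightarrow> real \<Rightarrow> real \<Rightarrow> real" where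
  "u2 a m x = 4*m*(m-1)*(m-2) * ((a + 2 * x) powr (m-3) - (a - 2 * x) powr (m-3))"
definition GG :: "real \<Rightarrow> real \<Rightarrow> real \<Rightarrow> real" where
  "GG a m t = (a - 2 * sqrt t) powr m + (a + 2 * sqrt t) powr m"
definition G' :: "real \<Rightarrow> real \<Rightarrow> real \<Rightarrow> real" where
  "G' a m t = uu a m (sqrt t) / sqrt t"

lemma uu_deriv:
  assumes "-a/2 < x" "x < a/2"
  shows "(uu a m has_real_derivative u1 a m x) (at x)"
proof -
  have p: "a + 2 * x > 0" "a - 2 * x > 0" using assms by auto
  show ?thesis unfolding uu_def u1_def
    using p by (auto intro!: derivative_eq_intros simp: algebra_simps)
qed

lemma u1_deriv:
  assumes "-a/2 < x" "x < a/2"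
  shows "(u1 a m has_real_derivative u2 a m x) (at x)"
proof -
  have p: "a + 2 * x > 0" "a - 2 * x > 0" using assms by auto
  show ?thesis unfolding u2_def u1_def
    using p by (auto intro!: derivative_eq_intros simp: algebra_simps)
qed

lemma u2_sign:
  assumes "e * (m*(m-1)*(m-2)*(m-3)) > 0" "0 < x" "x < a/2"
  shows "e * u2 a m x > 0"
proof -
  have p: "a + 2 * x > a - 2 * x" "a - 2 * x > 0" using assms by auto
  define B where "B = (a + 2 * x) powr (m-3) - (a - 2 * x) powr (m-3)"
  have m3: "m \<noteq> 3" using assms(1) by auto
  have "B / (m - 3) > 0"
  proof (cases "m > 3")
    case True
    then have "(a - 2 * x) powr (m-3) < (a + 2 * x) powr (m-3)"
      using p by (intro powr_less_mono2) auto
    then show ?thesis using True by (simp add: B_def)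
  next
    case False
    then have "m < 3" using m3 by auto
    then have "(a + 2 * x) powr (m-3) < (a - 2 * x) powr (m-3)"
      using p by (intro powr_less_mono2_neg) auto
    then show ?thesis using \<open>m < 3\<close> by (simp add: B_def divide_neg_neg)
  qed
  moreover have "0 < 4 * (e * (m*(m-1)*(m-2)*(m-3)))" using assms(1) by linarith
  ultimately have "0 < 4 * (e * (m*(m-1)*(m-2)*(m-3))) * (B / (m-3))"
    by (metis mult_pos_pos mult.commute)
  moreover have "e * u2 a m x = 4 * (e * (m*(m-1)*(m-2)*(m-3))) * (B / (m-3))"
    using m3 by (simp add: u2_def B_def field_simps)
  ultimately show ?thesis by simp
qed

lemma u1_incr:
  assumes "e * (m*(m-1)*(m-2)*(m-3)) > 0" "0 < x" "x < y" "y < a/2"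
  shows "e * u1 a m x < e * u1 a m y"
  apply (rule deriv_incr[of 0 "a/2" "\<lambda>x. e * u1 a m x" "\<lambda>x. e * u2 a m x"])
  using assms by (auto intro!: derivative_eq_intros u1_deriv u2_sign)

lemma uu_ratio_incr:
  assumes "e * (m*(m-1)*(m-2)*(m-3)) > 0" "0 < x" "x < y" "y < a/2"
  shows "e * uu a m x / x < e * uu a m y / y"
proof -
  have cont: "continuous_on {0..y} (\<lambda>x. e * uu a m x)"
    using assms
    by (intro continuous_at_imp_continuous_on ballI isCont_mult continuous_const DERIV_isCont[OF uu_deriv]) auto
  have "(e * uu a m x - e * uu a m 0) * (y - x) < (e * uu a m y - e * uu a m x) * (x - 0)"
    apply (rule chord_strict[of 0 x y _ "\<lambda>x. e * u1 a m x"])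
    using assms cont by (auto intro!: derivative_eq_intros uu_deriv u1_incr)
  moreover have "uu a m 0 = 0" by (simp add: uu_def)
  ultimately have "e * uu a m x * y < e * uu a m y * x" by (simp add: algebra_simps)
  thus ?thesis using assms by (simp add: field_simps)
qed

lemma GG_deriv:
  assumes "a > 0" "0 < t" "t < a^2/4"
  shows "(GG a m has_real_derivative G' a m t) (at t)"
proof -
  have "t < (a/2)^2" using assms by (simp add: power_divide)
  hence "sqrt t < sqrt ((a/2)^2)" by (rule real_sqrt_less_mono)
  hence s: "sqrt t > 0" "sqrt t < a/2" using assms by auto
  have p: "a + 2 * sqrt t > 0" "a - 2 * sqrt t > 0" using s assms(1) by linarith+
  show ?thesis unfolding GG_def G'_def uu_def
    using p s assms by (auto intro!: derivative_eq_intros simp: field_simps add_pos_nonneg)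
qed

lemma sqrt_bd:
  assumes "a > 0" "0 \<le> t" "t \<le> a^2/4"
  shows "2 * sqrt t \<le> a" "t < a^2/4 \<Longrightarrow> 2 * sqrt t < a"
proof -
  have "sqrt t \<le> sqrt ((a/2)^2)" using assms by (intro real_sqrt_le_mono) (simp add: power_divide)
  thus "2 * sqrt t \<le> a" using assms by simp
  assume "t < a^2/4"
  hence "sqrt t < sqrt ((a/2)^2)" using assms by (intro real_sqrt_less_mono) (simp add: power_divide)
  thus "2 * sqrt t < a" using assms by simp
qed

lemma G'_incr:
  assumes "e * (m*(m-1)*(m-2)*(m-3)) > 0" "a > 0" "0 < s" "s < t" "t < a^2/4"
  shows "e * G' a m s < e * G' a m t"
proof -
  have "sqrt s < sqrt t" using assms by simp
  moreover have "2 * sqrt t < a" using sqrt_bd[of a t] assms by auto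
  ultimately have "e * uu a m (sqrt s) / sqrt s < e * uu a m (sqrt t) / sqrt t"
    using assms by (intro uu_ratio_incr) auto
  thus ?thesis by (simp add: G'_def)
qed

lemma GG_cont_open:
  assumes "a > 0" "b < a^2/4"
  shows "continuous_on {0..b} (GG a m)"
proof -
  have "\<forall>x\<in>{0..b}. a - 2 * sqrt x \<noteq> 0 \<and> a + 2 * sqrt x \<noteq> 0"
  proof
    fix x assume x: "x \<in> {0..b}"
    hence "2 * sqrt x < a" using sqrt_bd(2)[of a x] assms by simp
    moreover have "sqrt x \<ge> 0" using x by simp
    ultimately show "a - 2 * sqrt x \<noteq> 0 \<and> a + 2 * sqrt x \<noteq> 0" using assms by linarith
  qed
  thus ?thesis unfolding GG_def by (intro continuous_intros) auto
qed

lemma GG_cont_closed: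
  assumes "a > 0" "m > 0"
  shows "continuous_on {0..a^2/4} (GG a m)"
proof -
  have "\<forall>x\<in>{0..a^2/4}. a - 2 * sqrt x \<ge> 0 \<and> a + 2 * sqrt x \<ge> 0"
  proof
    fix x assume x: "x \<in> {0..a^2/4}"
    hence "2 * sqrt x \<le> a" using sqrt_bd(1)[of a x] assms by simp
    moreover have "sqrt x \<ge> 0" using x by simp
    ultimately show "a - 2 * sqrt x \<ge> 0 \<and> a + 2 * sqrt x \<ge> 0" using assms by linarith
  qed
  hence h: "\<forall>x\<in>{0..a^2/4}. a - 2 * sqrt x \<ge> 0 \<and> (a - 2 * sqrt x = 0 \<longrightarrow> m > 0)"
        "\<forall>x\<in>{0..a^2/4}. a + 2 * sqrt x \<ge> 0 \<and> (a + 2 * sqrt x = 0 \<longrightarrow> m > 0)"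
    using assms by auto
  have c1: "continuous_on {0..a^2/4} (\<lambda>x. a - 2 * sqrt x)" "continuous_on {0..a^2/4} (\<lambda>x. a + 2 * sqrt x)"
    by (intro continuous_intros)+
  show ?thesis unfolding GG_def
    by (rule continuous_on_add[OF continuous_on_powr'[OF c1(1) continuous_on_const h(1)] continuous_on_powr'[OF c1(2) continuous_on_const h(2)]])
qed

lemma GG_tan:
  assumes "e * (m*(m-1)*(m-2)*(m-3)) > 0" "a > 0" "0 < c" "c < a^2/4" "0 \<le> t"
    "t < a^2/4 \<or> (m > 0 \<and> t \<le> a^2/4)" "t \<noteq> c"
  shows "e * GG a m c + e * G' a m c * (t - c) < e * GG a m t"
proof -
  define \<beta> where "\<beta> = (if t < a^2/4 then (max t c + a^2/4)/2 else a^2/4)"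
  have b: "t \<le> \<beta>" "c < \<beta>" "\<beta> \<le> a^2/4" using assms by (auto simp: \<beta>_def)
  have cont: "continuous_on {0..\<beta>} (GG a m)"
  proof (cases "t < a^2/4")
    case True
    then show ?thesis using GG_cont_open[of a "\<beta>" m] assms by (auto simp: \<beta>_def)
  next
    case False
    then show ?thesis using GG_cont_closed[of a m] assms by (auto simp: \<beta>_def)
  qed
  have cont': "continuous_on {0..\<beta>} (\<lambda>t. e * GG a m t)"
    using cont by (intro continuous_on_mult continuous_on_const)
  have der: "\<And>z. 0 < z \<Longrightarrow> z < \<beta> \<Longrightarrow> ((\<lambda>t. e * GG a m t) has_real_derivative e * G' a m z) (at z)"
    using b assms by (intro DERIV_cmult GG_deriv) auto
  have inc: "\<And>z w. 0 < z \<Longrightarrow> z < w \<Longrightarrow> w < \<beta> \<Longrightarrow> e * G' a m z < e * G' a m w"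
    using b assms by (intro G'_incr) auto
  show ?thesis
    using tangent_strict[of 0 t \<beta> c "\<lambda>t. e * GG a m t" "\<lambda>t. e * G' a m t", OF _ b(1) assms(3) b(2) assms(7) cont' der inc] assms(5)
    by simp
qed

lemma GG_chord:
  assumes "e * (m*(m-1)*(m-2)*(m-3)) > 0" "a > 0" "0 < R" "R \<le> a^2/4"
    "R < a^2/4 \<or> m > 0" "0 < t" "t < R"
  shows "(e * GG a m t - e * GG a m 0) * (R - t) < (e * GG a m R - e * GG a m t) * t"
proof -
  have cont: "continuous_on {0..R} (GG a m)"
  proof (cases "R < a^2/4")
    case True
    then show ?thesis using GG_cont_open[of a R m] assms by auto
  next
    case False
    then have "R = a^2/4" using assms by linarith
    then show ?thesis unfolding \<open>R = a^2/4\<close> using assms False by (intro GG_cont_closed) auto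
  qed
  have cont': "continuous_on {0..R} (\<lambda>t. e * GG a m t)"
    using cont by (intro continuous_on_mult continuous_on_const)
  have der: "\<And>z. 0 < z \<Longrightarrow> z < R \<Longrightarrow> ((\<lambda>t. e * GG a m t) has_real_derivative e * G' a m z) (at z)"
    using assms by (intro DERIV_cmult GG_deriv) auto
  have inc: "\<And>z w. 0 < z \<Longrightarrow> z < w \<Longrightarrow> w < R \<Longrightarrow> e * G' a m z < e * G' a m w"
    using assms by (intro G'_incr) auto
  show ?thesis
    using chord_strict[of 0 t R "\<lambda>t. e * GG a m t" "\<lambda>t. e * G' a m t", OF assms(6,7) cont' der inc]
    by simp
qed

lemma dist_axis_sq:
  fixes M :: "real ^ 'n"
  shows "(dist M (axis i 1))\<^sup>2 = (norm M)\<^sup>2 + 1 - 2 * M$i"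
    "(dist M (- axis i 1))\<^sup>2 = (norm M)\<^sup>2 + 1 + 2 * M$i"
  by (simp_all add: dist_norm power2_norm_eq_inner inner_diff_left inner_diff_right
      inner_axis inner_axis' inner_axis_axis algebra_simps)

lemma axis_neq_neg: "axis i (1::real) \<noteq> - axis j 1"
proof
  assume "axis i (1::real) = - axis j 1"
  hence "axis i (1::real) $ i = (- axis j 1) $ i" by simp
  thus False by (simp add: axis_def split: if_splits)
qed

lemma cross_eq: "(cross_vertices :: (real^'n) set) = range (\<lambda>i. axis i 1) \<union> range (\<lambda>i. - axis i 1)"
  unfolding cross_vertices_def by auto

lemma sum_cross:
  fixes F :: "real^'n \<Rightarrow> real"
  shows "(\<Sum>A\<in>cross_vertices. F A) = (\<Sum>i\<in>UNIV. F (axis i 1) + F (- axis i 1))"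
proof -
  have inj1: "inj (\<lambda>i::'n. axis i (1::real))" by (auto intro!: injI simp: axis_eq_axis)
  have inj2: "inj (\<lambda>i::'n. - axis i (1::real))" by (auto intro!: injI simp: axis_eq_axis)
  have disj: "range (\<lambda>i::'n. axis i (1::real)) \<inter> range (\<lambda>i. - axis i 1) = {}"
    using axis_neq_neg by blast
  have "(\<Sum>A\<in>cross_vertices. F A) = (\<Sum>A\<in>range (\<lambda>i. axis i 1). F A) + (\<Sum>A\<in>range (\<lambda>i. - axis i 1). F A)"
    unfolding cross_eq by (rule sum.union_disjoint) (use disj in auto)
  also have "\<dots> = (\<Sum>i\<in>UNIV. F (axis i 1)) + (\<Sum>i\<in>UNIV. F (- axis i 1))"
    by (simp add: sum.reindex[OF inj1] sum.reindex[OF inj2])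
  finally show ?thesis by (simp add: sum.distrib)
qed

lemma norm_sq_sum: "(norm (M :: real^'n))\<^sup>2 = (\<Sum>i\<in>UNIV. (M$i)\<^sup>2)"
  unfolding power2_norm_eq_inner inner_vec_def by (simp add: power2_eq_square)

lemma sphere_iff:
  assumes "r > 0"
  shows "(M :: real^'n) \<in> sphere 0 r \<longleftrightarrow> (\<Sum>i\<in>UNIV. (M$i)\<^sup>2) = r\<^sup>2"
proof -
  have "norm M = r \<longleftrightarrow> (norm M)\<^sup>2 = r\<^sup>2" using assms
    by (metis norm_ge_zero power2_eq_iff_nonneg less_imp_le)
  thus ?thesis by (simp add: norm_sq_sum)
qed

lemma comp_sq_le:
  assumes "r > 0" "(M :: real^'n) \<in> sphere 0 r"
  shows "(M$i)\<^sup>2 \<le> r\<^sup>2"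
proof -
  have "(M$i)\<^sup>2 \<le> (\<Sum>j\<in>UNIV. (M$j)\<^sup>2)" by (rule member_le_sum) auto
  moreover have "(\<Sum>j\<in>UNIV. (M$j)\<^sup>2) = r\<^sup>2" using sphere_iff[OF assms(1), of M] assms(2) by blast
  ultimately show ?thesis by linarith
qed

lemma pw_pair_GG:
  assumes "m \<noteq> 0"
  shows "pw (a - 2*x) m + pw (a + 2*x) m = GG a m (x\<^sup>2)"
proof -
  have p: "pw b m = b powr m" for b using assms by (simp add: pw_def)
  show ?thesis
  proof (cases "x \<ge> 0")
    case True then show ?thesis by (simp add: p GG_def)
  next
    case False then show ?thesis by (simp add: p GG_def)
  qed
qed

lemma Cn_formula:
  fixes M :: "real^'n"
  assumes "M \<in> sphere 0 r" "lam \<noteq> 0"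
  shows "Cn h lam M = (\<Sum>i\<in>UNIV. GG (r\<^sup>2+1+h) (lam/2) ((M$i)\<^sup>2))"
proof -
  have nm: "norm M = r" using assms by simp
  have "Cn h lam M = (\<Sum>i\<in>UNIV. pw ((r\<^sup>2+1+h) - 2 * M$i) (lam/2) + pw ((r\<^sup>2+1+h) + 2 * M$i) (lam/2))"
    unfolding Cn_def sum_cross dist_axis_sq nm by (simp add: algebra_simps)
  also have "\<dots> = (\<Sum>i\<in>UNIV. GG (r\<^sup>2+1+h) (lam/2) ((M$i)\<^sup>2))"
    using assms by (intro sum.cong refl pw_pair_GG) auto
  finally show ?thesis .
qed

lemma dom_iff:
  fixes M :: "real^'n"
  shows "M \<in> dom_pts r h \<longleftrightarrow> M \<in> sphere 0 r \<and> (\<forall>i. (r\<^sup>2+1+h) - 2 * M$i > 0 \<and> (r\<^sup>2+1+h) + 2 * M$i > 0)"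
proof -
  have "(\<forall>A\<in>cross_vertices. (dist M A)\<^sup>2 + h > 0) \<longleftrightarrow>
     (\<forall>i. (dist M (axis i 1))\<^sup>2 + h > 0 \<and> (dist M (- axis i 1))\<^sup>2 + h > 0)"
    unfolding cross_eq by blast
  thus ?thesis unfolding dom_pts_def by (auto simp: dist_axis_sq algebra_simps)
qed

lemma D_iff:
  assumes "r > 0"
  shows "(M :: real^'n) \<in> D_pts r \<longleftrightarrow> (\<forall>i. (M$i)\<^sup>2 = r\<^sup>2 / real CARD('n))"
proof -
  have sq: "(r / sqrt (real CARD('n)))\<^sup>2 = r\<^sup>2 / real CARD('n)"
    by (simp add: power_divide)
  have "x = r / sqrt (real CARD('n)) \<or> x = - (r / sqrt (real CARD('n))) \<longleftrightarrow> x\<^sup>2 = r\<^sup>2 / real CARD('n)" for x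
    unfolding sq[symmetric] by (rule power2_eq_iff[symmetric])
  thus ?thesis unfolding D_pts_def by auto
qed

lemma D_sphere:
  assumes "r > 0" "(M :: real^'n) \<in> D_pts r"
  shows "M \<in> sphere 0 r"
proof -
  have "(\<Sum>i\<in>UNIV. (M$i)\<^sup>2) = (\<Sum>i\<in>(UNIV::'n set). r\<^sup>2 / real CARD('n))"
    using D_iff[OF assms(1), of M] assms(2) by simp
  also have "\<dots> = r\<^sup>2" by simp
  finally show ?thesis using sphere_iff[OF assms(1)] by blast
qed

lemma E_iff:
  assumes "r > 0"
  shows "(M :: real^'n) \<in> E_pts r \<longleftrightarrow> (\<exists>i. (M$i)\<^sup>2 = r\<^sup>2 \<and> (\<forall>j. j \<noteq> i \<longrightarrow> M$j = 0))"
proof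
  assume "M \<in> E_pts r"
  then obtain A where A: "A \<in> cross_vertices" "M = r *\<^sub>R A" unfolding E_pts_def by blast
  then obtain i where "A = axis i 1 \<or> A = - axis i 1" unfolding cross_vertices_def by blast
  hence "M = r *\<^sub>R axis i 1 \<or> M = r *\<^sub>R (- axis i 1)" using A by blast
  thus "\<exists>i. (M$i)\<^sup>2 = r\<^sup>2 \<and> (\<forall>j. j \<noteq> i \<longrightarrow> M$j = 0)"
    by (intro exI[of _ i]) (auto simp: axis_def)
next
  assume "\<exists>i. (M$i)\<^sup>2 = r\<^sup>2 \<and> (\<forall>j. j \<noteq> i \<longrightarrow> M$j = 0)"
  then obtain i where i: "(M$i)\<^sup>2 = r\<^sup>2" "\<And>j. j \<noteq> i \<Longrightarrow> M$j = 0" by blast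
  from i(1) have "M$i = r \<or> M$i = -r" by (simp add: power2_eq_iff)
  hence "M = r *\<^sub>R axis i 1 \<or> M = r *\<^sub>R (- axis i 1)"
    using i(2) by (auto simp: vec_eq_iff axis_def)
  thus "M \<in> E_pts r" unfolding E_pts_def cross_vertices_def by blast
qed

lemma E_sphere:
  assumes "r > 0" "(M :: real^'n) \<in> E_pts r"
  shows "M \<in> sphere 0 r"
  using assms unfolding E_pts_def cross_vertices_def by auto

lemma a_ge:
  fixes r h :: real
  assumes "r > 0" "h \<ge> 0"
  shows "r\<^sup>2 \<le> (r\<^sup>2+1+h)\<^sup>2/4" "\<not> (h = 0 \<and> r = 1) \<Longrightarrow> r\<^sup>2 < (r\<^sup>2+1+h)\<^sup>2/4"
proof -
  have d: "(r\<^sup>2+1+h) - 2*r = (r-1)\<^sup>2 + h" by (simp add: power2_eq_square algebra_simps)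
  have "(r\<^sup>2+1+h)\<^sup>2/4 - r\<^sup>2 = ((r\<^sup>2+1+h) - 2*r) * ((r\<^sup>2+1+h) + 2*r) / 4"
    by (simp add: power2_eq_square algebra_simps)
  also have "\<dots> = ((r-1)\<^sup>2 + h) * ((r\<^sup>2+1+h) + 2*r) / 4" using d by simp
  finally have eq: "(r\<^sup>2+1+h)\<^sup>2/4 - r\<^sup>2 = ((r-1)\<^sup>2 + h) * ((r\<^sup>2+1+h) + 2*r) / 4" .
  have pos: "(r\<^sup>2+1+h) + 2*r > 0" using assms by (simp add: add_pos_nonneg)
  show "r\<^sup>2 \<le> (r\<^sup>2+1+h)\<^sup>2/4" using eq pos assms by (simp add: algebra_simps)
  assume "\<not> (h = 0 \<and> r = 1)"
  moreover have "(r-1)\<^sup>2 \<ge> 0" by simp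
  moreover have "r \<noteq> 1 \<Longrightarrow> (r-1)\<^sup>2 > 0" by simp
  ultimately have "(r-1)\<^sup>2 + h > 0" using assms
    by (metis add.right_neutral add_nonneg_pos order_le_less)
  hence "((r-1)\<^sup>2 + h) * ((r\<^sup>2+1+h) + 2*r) / 4 > 0" using pos by simp
  thus "r\<^sup>2 < (r\<^sup>2+1+h)\<^sup>2/4" using eq by linarith
qed

lemma core_D:
  fixes M :: "real^'n" and r h e m :: real
  assumes n2: "CARD('n) \<ge> 2" and r: "r > 0" and h: "h \<ge> 0"
    and es: "e * (m*(m-1)*(m-2)*(m-3)) > 0"
    and M: "M \<in> sphere 0 r"
    and dm: "\<forall>i. (M$i)\<^sup>2 < (r\<^sup>2+1+h)\<^sup>2/4 \<or> m > 0"
  shows "M \<notin> D_pts r \<Longrightarrow> e * (real CARD('n) * GG (r\<^sup>2+1+h) m (r\<^sup>2 / real CARD('n)))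
            < e * (\<Sum>i\<in>UNIV. GG (r\<^sup>2+1+h) m ((M$i)\<^sup>2))"
    and "M \<in> D_pts r \<Longrightarrow> (\<Sum>i\<in>UNIV. GG (r\<^sup>2+1+h) m ((M$i)\<^sup>2))
            = real CARD('n) * GG (r\<^sup>2+1+h) m (r\<^sup>2 / real CARD('n))"
proof -
  define a where "a = r\<^sup>2+1+h"
  define n where "n = real CARD('n)"
  define c where "c = r\<^sup>2 / n"
  have a0: "a > 0" using r h by (simp add: a_def add_pos_nonneg)
  have ra: "r\<^sup>2 \<le> a\<^sup>2/4" using a_ge[OF r h] by (simp add: a_def)
  have n0: "n \<ge> 2" using n2 by (simp add: n_def)
  have c0: "0 < c" using r n0 by (simp add: c_def)
  have cr: "c < r\<^sup>2" using r n0 by (simp add: c_def field_simps)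
  have ca: "c < a\<^sup>2/4" using cr ra by linarith
  have sumt: "(\<Sum>i\<in>UNIV. (M$i)\<^sup>2) = r\<^sup>2" using sphere_iff[OF r, of M] M by blast
  have ineq: "e * GG a m c + e * G' a m c * ((M$i)\<^sup>2 - c) \<le> e * GG a m ((M$i)\<^sup>2)" for i
  proof (cases "(M$i)\<^sup>2 = c")
    case True then show ?thesis by simp
  next
    case False
    have "(M$i)\<^sup>2 \<le> a\<^sup>2/4" using comp_sq_le[OF r M, of i] ra by linarith
    hence "(M$i)\<^sup>2 < a\<^sup>2/4 \<or> (m > 0 \<and> (M$i)\<^sup>2 \<le> a\<^sup>2/4)" using dm by (auto simp: a_def)
    from GG_tan[OF es a0 c0 ca _ this False] show ?thesis by simp
  qed
  have lsum: "(\<Sum>i\<in>UNIV. e * GG a m c + e * G' a m c * ((M$i)\<^sup>2 - c)) = n * (e * GG a m c)"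
  proof -
    have "(\<Sum>i\<in>UNIV. e * GG a m c + e * G' a m c * ((M$i)\<^sup>2 - c))
        = n * (e * GG a m c) + e * G' a m c * ((\<Sum>i\<in>UNIV. (M$i)\<^sup>2) - n * c)"
      by (simp add: sum.distrib sum_distrib_left sum_subtractf n_def algebra_simps)
    also have "(\<Sum>i\<in>UNIV. (M$i)\<^sup>2) - n * c = 0" using sumt n0 by (simp add: c_def)
    finally show ?thesis by simp
  qed
  {
    assume "M \<notin> D_pts r"
    then obtain i where i: "(M$i)\<^sup>2 \<noteq> c" using D_iff[OF r, of M] by (auto simp: c_def n_def)
    have "(M$i)\<^sup>2 \<le> a\<^sup>2/4" using comp_sq_le[OF r M, of i] ra by linarith
    hence "(M$i)\<^sup>2 < a\<^sup>2/4 \<or> (m > 0 \<and> (M$i)\<^sup>2 \<le> a\<^sup>2/4)" using dm by (auto simp: a_def)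
    from GG_tan[OF es a0 c0 ca _ this i]
    have "e * GG a m c + e * G' a m c * ((M$i)\<^sup>2 - c) < e * GG a m ((M$i)\<^sup>2)" by simp
    hence "(\<Sum>i\<in>UNIV. e * GG a m c + e * G' a m c * ((M$i)\<^sup>2 - c)) < (\<Sum>i\<in>UNIV. e * GG a m ((M$i)\<^sup>2))"
      using ineq by (intro sum_strict_mono_ex1) auto
    thus "e * (real CARD('n) * GG (r\<^sup>2+1+h) m (r\<^sup>2 / real CARD('n)))
            < e * (\<Sum>i\<in>UNIV. GG (r\<^sup>2+1+h) m ((M$i)\<^sup>2))"
      unfolding lsum by (simp add: a_def n_def c_def sum_distrib_left algebra_simps)
  }
  {
    assume "M \<in> D_pts r"
    hence "\<forall>i. (M$i)\<^sup>2 = c" using D_iff[OF r, of M] by (simp add: c_def n_def)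
    thus "(\<Sum>i\<in>UNIV. GG (r\<^sup>2+1+h) m ((M$i)\<^sup>2)) = real CARD('n) * GG (r\<^sup>2+1+h) m (r\<^sup>2 / real CARD('n))"
      by (simp add: a_def c_def n_def)
  }
qed

lemma core_E:
  fixes M :: "real^'n" and r h e m :: real
  assumes r: "r > 0" and h: "h \<ge> 0"
    and es: "e * (m*(m-1)*(m-2)*(m-3)) > 0"
    and M: "M \<in> sphere 0 r"
    and ns: "r\<^sup>2 < (r\<^sup>2+1+h)\<^sup>2/4 \<or> m > 0"
  shows "M \<notin> E_pts r \<Longrightarrow> e * (\<Sum>i\<in>UNIV. GG (r\<^sup>2+1+h) m ((M$i)\<^sup>2))
            < e * ((real CARD('n) - 1) * GG (r\<^sup>2+1+h) m 0 + GG (r\<^sup>2+1+h) m (r\<^sup>2))"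
    and "M \<in> E_pts r \<Longrightarrow> (\<Sum>i\<in>UNIV. GG (r\<^sup>2+1+h) m ((M$i)\<^sup>2))
            = (real CARD('n) - 1) * GG (r\<^sup>2+1+h) m 0 + GG (r\<^sup>2+1+h) m (r\<^sup>2)"
proof -
  define a where "a = r\<^sup>2+1+h"
  define n where "n = real CARD('n)"
  define R where "R = r\<^sup>2"
  have a0: "a > 0" using r h by (simp add: a_def add_pos_nonneg)
  have ra: "R \<le> a\<^sup>2/4" using a_ge[OF r h] by (simp add: a_def R_def)
  have R0: "R > 0" using r by (simp add: R_def)
  have ns': "R < a\<^sup>2/4 \<or> m > 0" using ns by (simp add: a_def R_def)
  have sumt: "(\<Sum>i\<in>UNIV. (M$i)\<^sup>2) = R" using sphere_iff[OF r, of M] M by (simp add: R_def)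
  have tR: "0 \<le> (M$i)\<^sup>2" "(M$i)\<^sup>2 \<le> R" for i using comp_sq_le[OF r M, of i] by (auto simp: R_def)
  have strict: "e * GG a m t * R < e * GG a m 0 * (R - t) + e * GG a m R * t" if "0 < t" "t < R" for t
  proof -
    have "(e * GG a m t - e * GG a m 0) * (R - t) < (e * GG a m R - e * GG a m t) * t"
      by (rule GG_chord[OF es a0 R0 ra ns' that])
    thus ?thesis by (simp add: algebra_simps)
  qed
  have ineq: "e * GG a m ((M$i)\<^sup>2) * R \<le> e * GG a m 0 * (R - (M$i)\<^sup>2) + e * GG a m R * (M$i)\<^sup>2" for i
  proof (cases "(M$i)\<^sup>2 = 0 \<or> (M$i)\<^sup>2 = R")
    case True then show ?thesis by (auto simp: algebra_simps)
  next
    case False then show ?thesis using strict[of "(M$i)\<^sup>2"] tR[of i] by force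
  qed
  have rsum: "(\<Sum>i\<in>UNIV. e * GG a m 0 * (R - (M$i)\<^sup>2) + e * GG a m R * (M$i)\<^sup>2)
      = (e * ((n - 1) * GG a m 0 + GG a m R)) * R"
  proof -
    have "(\<Sum>i\<in>UNIV. e * GG a m 0 * (R - (M$i)\<^sup>2) + e * GG a m R * (M$i)\<^sup>2)
      = e * GG a m 0 * (n * R - (\<Sum>i\<in>UNIV. (M$i)\<^sup>2)) + e * GG a m R * (\<Sum>i\<in>UNIV. (M$i)\<^sup>2)"
      by (simp add: sum.distrib sum_distrib_left sum_subtractf n_def algebra_simps)
    also have "\<dots> = (e * ((n - 1) * GG a m 0 + GG a m R)) * R" unfolding sumt by (simp add: algebra_simps)
    finally show ?thesis .
  qed
  have lsum: "(\<Sum>i\<in>UNIV. e * GG a m ((M$i)\<^sup>2) * R) = (e * (\<Sum>i\<in>UNIV. GG a m ((M$i)\<^sup>2))) * R"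
    by (simp add: sum_distrib_left sum_distrib_right mult.assoc)
  {
    assume nE: "M \<notin> E_pts r"
    have "\<exists>i. 0 < (M$i)\<^sup>2 \<and> (M$i)\<^sup>2 < R"
    proof (rule ccontr)
      assume nex: "\<not> (\<exists>i. 0 < (M$i)\<^sup>2 \<and> (M$i)\<^sup>2 < R)"
      have all: "\<forall>i. (M$i)\<^sup>2 = 0 \<or> (M$i)\<^sup>2 = R"
      proof
        fix i
        have "\<not> (0 < (M$i)\<^sup>2 \<and> (M$i)\<^sup>2 < R)" using nex by blast
        thus "(M$i)\<^sup>2 = 0 \<or> (M$i)\<^sup>2 = R" using tR[of i] by (simp add: not_less) (meson order_antisym_conv)
      qed
      have "\<exists>i. (M$i)\<^sup>2 \<noteq> 0"
      proof (rule ccontr)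
        assume "\<not> ?thesis"
        hence "(\<Sum>i\<in>UNIV. (M$i)\<^sup>2) = 0" by simp
        thus False using sumt R0 by simp
      qed
      then obtain i where i: "(M$i)\<^sup>2 = R" using all by blast
      have "\<forall>j. j \<noteq> i \<longrightarrow> M$j = 0"
      proof (intro allI impI)
        fix j assume ji: "j \<noteq> i"
        have "(\<Sum>k\<in>{i,j}. (M$k)\<^sup>2) \<le> (\<Sum>k\<in>UNIV. (M$k)\<^sup>2)" by (rule sum_mono2) auto
        hence "(M$i)\<^sup>2 + (M$j)\<^sup>2 \<le> R" using ji sumt by simp
        hence "(M$j)\<^sup>2 = 0" using i tR[of j] by linarith
        thus "M$j = 0" by simp
      qed
      hence "M \<in> E_pts r" using E_iff[OF r, of M] i by (auto simp: R_def)
      thus False using nE by blast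
    qed
    then obtain i where i: "0 < (M$i)\<^sup>2" "(M$i)\<^sup>2 < R" by blast
    have "(\<Sum>i\<in>UNIV. e * GG a m ((M$i)\<^sup>2) * R) < (\<Sum>i\<in>UNIV. e * GG a m 0 * (R - (M$i)\<^sup>2) + e * GG a m R * (M$i)\<^sup>2)"
      using ineq strict[OF i] by (intro sum_strict_mono_ex1) auto
    hence "(e * (\<Sum>i\<in>UNIV. GG a m ((M$i)\<^sup>2))) * R < (e * ((n - 1) * GG a m 0 + GG a m R)) * R"
      unfolding lsum rsum .
    hence "e * (\<Sum>i\<in>UNIV. GG a m ((M$i)\<^sup>2)) < e * ((n - 1) * GG a m 0 + GG a m R)"
      using R0 by (simp add: mult_less_cancel_right)
    thus "e * (\<Sum>i\<in>UNIV. GG (r\<^sup>2+1+h) m ((M$i)\<^sup>2))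
            < e * ((real CARD('n) - 1) * GG (r\<^sup>2+1+h) m 0 + GG (r\<^sup>2+1+h) m (r\<^sup>2))"
      by (simp add: a_def n_def R_def)
  }
  {
    assume "M \<in> E_pts r"
    then obtain i where i: "(M$i)\<^sup>2 = r\<^sup>2" "\<forall>j. j \<noteq> i \<longrightarrow> M$j = 0" using E_iff[OF r, of M] by blast
    have "(\<Sum>j\<in>UNIV. GG a m ((M$j)\<^sup>2)) = GG a m ((M$i)\<^sup>2) + (\<Sum>j\<in>UNIV-{i}. GG a m ((M$j)\<^sup>2))"
      by (simp add: sum.remove)
    also have "(\<Sum>j\<in>UNIV-{i}. GG a m ((M$j)\<^sup>2)) = (\<Sum>j\<in>UNIV-{i}. GG a m 0)"
      using i(2) by (intro sum.cong) auto
    also have "\<dots> = (n - 1) * GG a m 0" by (simp add: n_def card_Diff_singleton of_nat_diff)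
    finally show "(\<Sum>i\<in>UNIV. GG (r\<^sup>2+1+h) m ((M$i)\<^sup>2))
            = (real CARD('n) - 1) * GG (r\<^sup>2+1+h) m 0 + GG (r\<^sup>2+1+h) m (r\<^sup>2)"
      using i(1) by (simp add: a_def n_def)
  }
qed

lemma argmin_eq:
  assumes "T \<subseteq> S" "T \<noteq> {}" "\<And>x. x \<in> T \<Longrightarrow> F x = v" "\<And>x. x \<in> S \<Longrightarrow> x \<notin> T \<Longrightarrow> v < F x"
  shows "argmin_on F S = T"
proof -
  obtain y where y: "y \<in> T" using assms(2) by blast
  have "x \<in> T" if "x \<in> S" "\<forall>z\<in>S. F x \<le> F z" for x
    using that y assms by (metis not_less subsetD)
  moreover have "F x \<le> F z" if "x \<in> T" "z \<in> S" for x z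
    using that assms by (cases "z \<in> T") (auto intro: less_imp_le)
  ultimately show ?thesis unfolding argmin_on_def using assms(1) by blast
qed

lemma argmax_eq:
  assumes "T \<subseteq> S" "T \<noteq> {}" "\<And>x. x \<in> T \<Longrightarrow> F x = v" "\<And>x. x \<in> S \<Longrightarrow> x \<notin> T \<Longrightarrow> F x < v"
  shows "argmax_on F S = T"
proof -
  obtain y where y: "y \<in> T" using assms(2) by blast
  have "x \<in> T" if "x \<in> S" "\<forall>z\<in>S. F z \<le> F x" for x
    using that y assms by (metis not_less subsetD)
  moreover have "F z \<le> F x" if "x \<in> T" "z \<in> S" for x z
    using that assms by (cases "z \<in> T") (auto intro: less_imp_le)
  ultimately show ?thesis unfolding argmax_on_def using assms(1) by blast
qed

lemma D_ne: "D_pts r \<noteq> ({} :: (real^'n) set)"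
proof -
  have "(\<chi> i. r / sqrt (real CARD('n))) \<in> (D_pts r :: (real^'n) set)" by (simp add: D_pts_def)
  thus ?thesis by blast
qed

lemma E_ne: "E_pts r \<noteq> ({} :: (real^'n) set)"
  unfolding E_pts_def cross_vertices_def by blast

lemma res_D:
  fixes r h e m :: real and S :: "(real^'n) set"
  assumes n2: "CARD('n) \<ge> 2" and r: "r > 0" and h: "h \<ge> 0"
    and es: "e * (m*(m-1)*(m-2)*(m-3)) > 0" and m0: "m \<noteq> 0"
    and S: "D_pts r \<subseteq> S" "S \<subseteq> sphere 0 r"
    and dm: "\<And>M i. M \<in> S \<Longrightarrow> (M$i)\<^sup>2 < (r\<^sup>2+1+h)\<^sup>2/4 \<or> m > 0"
  shows "e = 1 \<Longrightarrow> argmin_on (Cn h (2*m)) S = D_pts r"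
    and "e = -1 \<Longrightarrow> argmax_on (Cn h (2*m)) S = D_pts r"
proof -
  define v where "v = real CARD('n) * GG (r\<^sup>2+1+h) m (r\<^sup>2 / real CARD('n))"
  have f: "Cn h (2*m) M = (\<Sum>i\<in>UNIV. GG (r\<^sup>2+1+h) m ((M$i)\<^sup>2))" if "M \<in> S" for M :: "real^'n"
    using Cn_formula[of M r "2*m" h] that S m0 by auto
  have eqD: "Cn h (2*m) M = v" if "M \<in> D_pts r" for M :: "real^'n"
  proof -
    have MS: "M \<in> S" using that S by blast
    hence "M \<in> sphere 0 r" "\<forall>i. (M$i)\<^sup>2 < (r\<^sup>2+1+h)\<^sup>2/4 \<or> m > 0" using S dm by auto
    from core_D(2)[OF n2 r h es this that] show ?thesis using f[OF MS] by (simp add: v_def)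
  qed
  have lt: "e * v < e * Cn h (2*m) M" if MS: "M \<in> S" "M \<notin> D_pts r" for M :: "real^'n"
  proof -
    have "M \<in> sphere 0 r" "\<forall>i. (M$i)\<^sup>2 < (r\<^sup>2+1+h)\<^sup>2/4 \<or> m > 0" using MS S dm by auto
    from core_D(1)[OF n2 r h es this MS(2)] show ?thesis using f[OF MS(1)] by (simp add: v_def)
  qed
  show "e = 1 \<Longrightarrow> argmin_on (Cn h (2*m)) S = D_pts r"
    by (rule argmin_eq[OF S(1) D_ne eqD]) (use lt in auto)
  show "e = -1 \<Longrightarrow> argmax_on (Cn h (2*m)) S = D_pts r"
    by (rule argmax_eq[OF S(1) D_ne eqD]) (use lt in auto)
qed

lemma res_E:
  fixes r h e m :: real and S :: "(real^'n) set"
  assumes r: "r > 0" and h: "h \<ge> 0"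
    and es: "e * (m*(m-1)*(m-2)*(m-3)) > 0" and m0: "m \<noteq> 0"
    and S: "E_pts r \<subseteq> S" "S \<subseteq> sphere 0 r"
    and ns: "r\<^sup>2 < (r\<^sup>2+1+h)\<^sup>2/4 \<or> m > 0"
  shows "e = 1 \<Longrightarrow> argmax_on (Cn h (2*m)) S = E_pts r"
    and "e = -1 \<Longrightarrow> argmin_on (Cn h (2*m)) S = E_pts r"
proof -
  define v where "v = (real CARD('n) - 1) * GG (r\<^sup>2+1+h) m 0 + GG (r\<^sup>2+1+h) m (r\<^sup>2)"
  have f: "Cn h (2*m) M = (\<Sum>i\<in>UNIV. GG (r\<^sup>2+1+h) m ((M$i)\<^sup>2))" if "M \<in> S" for M :: "real^'n"
    using Cn_formula[of M r "2*m" h] that S m0 by auto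
  have eqE: "Cn h (2*m) M = v" if "M \<in> E_pts r" for M :: "real^'n"
  proof -
    have MS: "M \<in> S" using that S by blast
    hence "M \<in> sphere 0 r" using S by auto
    from core_E(2)[OF r h es this ns that] show ?thesis using f[OF MS] by (simp add: v_def)
  qed
  have lt: "e * Cn h (2*m) M < e * v" if MS: "M \<in> S" "M \<notin> E_pts r" for M :: "real^'n"
  proof -
    have "M \<in> sphere 0 r" using MS S by auto
    from core_E(1)[OF r h es this ns MS(2)] show ?thesis using f[OF MS(1)] by (simp add: v_def)
  qed
  show "e = 1 \<Longrightarrow> argmax_on (Cn h (2*m)) S = E_pts r"
    by (rule argmax_eq[OF S(1) E_ne eqE]) (use lt in auto)
  show "e = -1 \<Longrightarrow> argmin_on (Cn h (2*m)) S = E_pts r"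
    by (rule argmin_eq[OF S(1) E_ne eqE]) (use lt in auto)
qed

lemma r_half:
  fixes r h :: real
  assumes "r > 0" "h \<ge> 0"
  shows "2*r \<le> r\<^sup>2+1+h" "\<not> (h = 0 \<and> r = 1) \<Longrightarrow> 2*r < r\<^sup>2+1+h"
proof -
  have d: "(r\<^sup>2+1+h) - 2*r = (r-1)\<^sup>2 + h" by (simp add: power2_eq_square algebra_simps)
  have "(r-1)\<^sup>2 \<ge> 0" by simp
  thus "2*r \<le> r\<^sup>2+1+h" using d assms by linarith
  assume "\<not> (h = 0 \<and> r = 1)"
  moreover have "r \<noteq> 1 \<Longrightarrow> (r-1)\<^sup>2 > 0" by simp
  ultimately have "(r-1)\<^sup>2 + h > 0" using assms \<open>(r-1)\<^sup>2 \<ge> 0\<close>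
    by (metis add.right_neutral add_nonneg_pos order_le_less)
  thus "2*r < r\<^sup>2+1+h" using d by linarith
qed

lemma abs_sq_lt: "\<bar>x::real\<bar> < b \<Longrightarrow> x\<^sup>2 < b\<^sup>2"
  using power_strict_mono[of "\<bar>x\<bar>" b 2] by simp

lemma lin1: "0 < a - 2 * (x::real) \<Longrightarrow> 0 < a + 2 * x \<Longrightarrow> \<bar>x\<bar> < a / 2"
  by (simp add: abs_less_iff)
lemma lin2: "\<bar>x::real\<bar> < a / 2 \<Longrightarrow> 0 < a - 2 * x \<and> 0 < a + 2 * x"
  by (cases "x \<ge> 0") auto
lemma lin3: "c < r \<Longrightarrow> 0 \<le> c \<Longrightarrow> x = c \<or> x = -c \<Longrightarrow> \<bar>x::real\<bar> < r"
  by auto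
lemma lin4: "\<bar>x::real\<bar> < r \<Longrightarrow> 2 * r \<le> a \<Longrightarrow> \<bar>x\<bar> < a / 2"
  by simp
lemma lin5: "\<bar>x::real\<bar> \<le> r \<Longrightarrow> 2 * r < a \<Longrightarrow> \<bar>x\<bar> < a / 2"
  by simp

lemma dom_sub: "dom_pts r h \<subseteq> sphere 0 r"
  unfolding dom_pts_def by auto

lemma dom_sq:
  fixes M :: "real^'n"
  assumes "M \<in> dom_pts r h"
  shows "(M$i)\<^sup>2 < (r\<^sup>2+1+h)\<^sup>2/4"
proof -
  have "(r\<^sup>2+1+h) - 2 * M$i > 0" "(r\<^sup>2+1+h) + 2 * M$i > 0" using assms dom_iff[of M r h] by auto
  hence "\<bar>M$i\<bar> < (r\<^sup>2+1+h)/2" by (rule lin1)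
  hence "(M$i)\<^sup>2 < ((r\<^sup>2+1+h)/2)\<^sup>2" by (rule abs_sq_lt)
  thus ?thesis by (simp add: power_divide)
qed

lemma in_dom:
  fixes M :: "real^'n"
  assumes "M \<in> sphere 0 r" "\<And>i. \<bar>M$i\<bar> < (r\<^sup>2+1+h)/2"
  shows "M \<in> dom_pts r h"
proof -
  have "(r\<^sup>2+1+h) - 2 * M$i > 0 \<and> (r\<^sup>2+1+h) + 2 * M$i > 0" for i
    using lin2[OF assms(2)[of i]] .
  thus ?thesis using dom_iff[of M r h] assms(1) by blast
qed

lemma sphere_dom:
  fixes r h :: real
  assumes "r > 0" "h \<ge> 0" "\<not> (h = 0 \<and> r = 1)"
  shows "sphere 0 r \<subseteq> (dom_pts r h :: (real^'n) set)"
proof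
  fix M :: "real^'n" assume M: "M \<in> sphere 0 r"
  have "\<bar>M$i\<bar> < (r\<^sup>2+1+h)/2" for i
  proof -
    have "(M$i)\<^sup>2 \<le> r\<^sup>2" by (rule comp_sq_le[OF assms(1) M])
    hence sq: "\<bar>M$i\<bar>\<^sup>2 \<le> r\<^sup>2" by simp
    have "\<bar>M$i\<bar> \<le> r" by (rule power2_le_imp_le[OF sq]) (use assms(1) in simp)
    thus ?thesis using r_half(2)[OF assms] by (rule lin5)
  qed
  thus "M \<in> dom_pts r h" by (rule in_dom[OF M])
qed

lemma D_dom:
  fixes r h :: real
  assumes n2: "CARD('n) \<ge> 2" and "r > 0" "h \<ge> 0"
  shows "D_pts r \<subseteq> (dom_pts r h :: (real^'n) set)"
proof
  fix M :: "real^'n" assume M: "M \<in> D_pts r"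
  have "sqrt 1 < sqrt (real CARD('n))" using n2 by (intro real_sqrt_less_mono) simp
  hence s1: "1 < sqrt (real CARD('n))" by simp
  hence "r / sqrt (real CARD('n)) < r" using assms by (simp add: divide_less_eq)
  moreover have "r / sqrt (real CARD('n)) \<ge> 0" using assms by simp
  moreover have "M$i = r / sqrt (real CARD('n)) \<or> M$i = - (r / sqrt (real CARD('n)))" for i
    using M unfolding D_pts_def by blast
  ultimately have "\<bar>M$i\<bar> < r" for i by (intro lin3)
  hence "\<bar>M$i\<bar> < (r\<^sup>2+1+h)/2" for i using r_half(1)[OF assms(2,3)] by (rule lin4)
  thus "M \<in> dom_pts r h" by (rule in_dom[OF D_sphere[OF assms(2) M]])
qed

lemma two_idx:
  assumes "CARD('n) \<ge> 2"
  obtains i j :: "'n::finite" where "i \<noteq> j"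
proof -
  have "\<not> (card (UNIV :: 'n set) \<le> Suc 0)" using assms by simp
  hence "\<not> (\<forall>a1\<in>(UNIV::'n set). \<forall>a2\<in>UNIV. a1 = a2)" using card_le_Suc0_iff_eq[of "UNIV :: 'n set"] by simp
  thus ?thesis using that by blast
qed

definition vec2 :: "'n \<Rightarrow> 'n \<Rightarrow> real \<Rightarrow> real \<Rightarrow> real^'n" where
  "vec2 i j A B = (\<chi> k. if k = i then A else if k = j then B else 0)"

lemma vec2_sum:
  assumes "i \<noteq> j"
  shows "(\<Sum>k\<in>UNIV. (vec2 i j A B $ k)\<^sup>2) = A\<^sup>2 + B\<^sup>2"
proof -
  have "(vec2 i j A B $ k)\<^sup>2 = (if k = i then A\<^sup>2 else 0) + (if k = j then B\<^sup>2 else 0)" for k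
    using assms by (auto simp: vec2_def)
  hence "(\<Sum>k\<in>UNIV. (vec2 i j A B $ k)\<^sup>2) = (\<Sum>k\<in>UNIV. (if k = i then A\<^sup>2 else 0) + (if k = j then B\<^sup>2 else 0))"
    by simp
  also have "\<dots> = A\<^sup>2 + B\<^sup>2" by (simp add: sum.distrib)
  finally show ?thesis .
qed

lemma vec2_abs: "\<bar>A\<bar> < c \<Longrightarrow> \<bar>B\<bar> < c \<Longrightarrow> 0 < c \<Longrightarrow> \<bar>vec2 i j A B $ k\<bar> < c"
  by (auto simp: vec2_def)

lemma distinct_min:
  assumes "argmin_on F S = T" "x \<in> T" "y \<in> S" "y \<notin> T"
  shows "F x \<noteq> F y"
  using assms unfolding argmin_on_def by auto

lemma distinct_max:
  assumes "argmax_on F S = T" "x \<in> T" "y \<in> S" "y \<notin> T"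
  shows "F x \<noteq> F y"
  using assms unfolding argmax_on_def by auto

lemma pw_nonneg: "pw b m \<ge> 0"
  by (simp add: pw_def)

lemma finite_cross: "finite (cross_vertices :: (real^'n) set)"
  unfolding cross_eq by simp

lemma Cn_ge_term:
  fixes M :: "real^'n"
  shows "pw ((dist M (axis i 1))\<^sup>2 + h) (lam/2) \<le> Cn h lam M"
  unfolding Cn_def
  by (rule member_le_sum[where f = "\<lambda>A. pw ((dist M A)\<^sup>2 + h) (lam / 2)", OF _ _ finite_cross])
     (auto simp: pw_nonneg cross_vertices_def)

lemma unbdd:
  assumes n2: "CARD('n) \<ge> 2" and lam: "lam < 0"
  shows "\<not> bdd_above (Cn 0 lam ` (dom_pts 1 0 :: (real^'n) set))"
proof
  assume "bdd_above (Cn 0 lam ` (dom_pts 1 0 :: (real^'n) set))"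
  then obtain B where B: "\<And>M. M \<in> (dom_pts 1 0 :: (real^'n) set) \<Longrightarrow> Cn 0 lam M \<le> B"
    unfolding bdd_above_def by auto
  obtain i j :: 'n where ij: "i \<noteq> j" using two_idx[OF n2] by blast
  define m where "m = lam / 2"
  have m: "m < 0" using lam by (simp add: m_def)
  define K where "K = max B 1 + 1"
  have K: "K > 1" "K > B" by (auto simp: K_def)
  define \<delta> where "\<delta> = K powr (1/m)"
  have d0: "\<delta> > 0" using K by (simp add: \<delta>_def)
  have d1: "\<delta> < 1" unfolding \<delta>_def using K m by (intro powr_less_one) (auto simp: divide_neg_pos)
  have dK: "\<delta> powr m = K" using m K by (simp add: \<delta>_def powr_powr)
  define s where "s = 1 - \<delta>/2"
  have s: "0 < s" "s < 1" using d0 d1 by (auto simp: s_def)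
  define q where "q = sqrt (1 - s\<^sup>2)"
  have s2: "s\<^sup>2 < 1" using s by (simp add: power_less_one_iff abs_square_less_1)
  have le: "0 \<le> 1 - s\<^sup>2" using s2 by linarith
  have q2: "q\<^sup>2 = 1 - s\<^sup>2" unfolding q_def by (rule real_sqrt_pow2[OF le])
  have q0: "q \<ge> 0" using le by (simp add: q_def)
  have "s\<^sup>2 > 0" using s by simp
  hence "1 - s\<^sup>2 < 1" by simp
  hence "sqrt (1 - s\<^sup>2) < sqrt 1" by (intro real_sqrt_less_mono)
  hence q1: "q < 1" by (simp add: q_def)
  define M where "M = vec2 i j s q"
  have sph: "M \<in> sphere 0 1"
    using sphere_iff[of 1 M] vec2_sum[OF ij, of s q] q2 by (simp add: M_def)
  have "\<bar>M$k\<bar> < (1\<^sup>2+1+0)/2" for k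
    unfolding M_def by (rule vec2_abs) (use s q0 q1 in auto)
  hence dom: "M \<in> dom_pts 1 0" by (intro in_dom[OF sph])
  have "(dist M (axis i 1))\<^sup>2 + 0 = \<delta>"
    using sph by (simp add: dist_axis_sq M_def vec2_def s_def)
  hence "pw ((dist M (axis i 1))\<^sup>2 + 0) (lam/2) = K"
    using d0 dK by (simp add: pw_def m_def)
  hence "K \<le> Cn 0 lam M" using Cn_ge_term[of M i 0 lam] by simp
  thus False using B[OF dom] K by simp
qed

lemma GG_123:
  assumes "a > 0" "0 \<le> t" "t \<le> a\<^sup>2/4"
  shows "GG a 1 t = 2*a" "GG a 2 t = 2*a\<^sup>2 + 8*t" "GG a 3 t = 2*a^3 + 24*a*t"
proof -
  have b: "a - 2 * sqrt t \<ge> 0" "a + 2 * sqrt t \<ge> 0" using sqrt_bd(1)[OF assms] real_sqrt_ge_zero[OF assms(2)] assms(1) by auto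
  have st: "(sqrt t)\<^sup>2 = t" using assms by simp
  show "GG a 1 t = 2*a" unfolding GG_def using b by simp
  have "GG a 2 t = (a - 2 * sqrt t)\<^sup>2 + (a + 2 * sqrt t)\<^sup>2" unfolding GG_def using b by (simp add: powr_numeral)
  also have "\<dots> = 2*a\<^sup>2 + 8*(sqrt t)\<^sup>2" by (simp add: power2_eq_square algebra_simps)
  finally show "GG a 2 t = 2*a\<^sup>2 + 8*t" using st by simp
  have "GG a 3 t = (a - 2 * sqrt t)^3 + (a + 2 * sqrt t)^3" unfolding GG_def using b by (simp add: powr_numeral)
  also have "\<dots> = 2*a^3 + 24*a*(sqrt t)\<^sup>2" by (simp add: power2_eq_square power3_eq_cube algebra_simps)
  finally show "GG a 3 t = 2*a^3 + 24*a*t" using st by simp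
qed

lemma Cn_const:
  fixes M :: "real^'n" and r h :: real
  assumes r: "r > 0" and h: "h \<ge> 0" and M: "M \<in> sphere 0 r"
  shows "Cn h 2 M = 2 * real CARD('n) * (r\<^sup>2+1+h)"
    "Cn h 4 M = 2 * real CARD('n) * (r\<^sup>2+1+h)\<^sup>2 + 8 * r\<^sup>2"
    "Cn h 6 M = 2 * real CARD('n) * (r\<^sup>2+1+h)^3 + 24 * (r\<^sup>2+1+h) * r\<^sup>2"
proof -
  define a where "a = r\<^sup>2+1+h"
  have a0: "a > 0" using r h by (simp add: a_def add_pos_nonneg)
  have t: "0 \<le> (M$i)\<^sup>2" "(M$i)\<^sup>2 \<le> a\<^sup>2/4" for i
    using comp_sq_le[OF r M, of i] a_ge(1)[OF r h] by (auto simp: a_def)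
  have sumt: "(\<Sum>i\<in>UNIV. (M$i)\<^sup>2) = r\<^sup>2" using sphere_iff[OF r, of M] M by blast
  have "Cn h 2 M = (\<Sum>i\<in>UNIV. GG a 1 ((M$i)\<^sup>2))" using Cn_formula[OF M, of 2 h] by (simp add: a_def)
  also have "\<dots> = (\<Sum>i\<in>(UNIV::'n set). 2*a)" using GG_123(1)[OF a0 t] by simp
  finally show "Cn h 2 M = 2 * real CARD('n) * (r\<^sup>2+1+h)" by (simp add: a_def)
  have "Cn h 4 M = (\<Sum>i\<in>UNIV. GG a 2 ((M$i)\<^sup>2))" using Cn_formula[OF M, of 4 h] by (simp add: a_def)
  also have "\<dots> = (\<Sum>i\<in>UNIV. 2*a\<^sup>2 + 8*(M$i)\<^sup>2)" using GG_123(2)[OF a0 t] by simp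
  also have "\<dots> = 2 * real CARD('n) * a\<^sup>2 + 8 * r\<^sup>2"
    by (simp add: sum.distrib sum_distrib_left[symmetric] sumt)
  finally show "Cn h 4 M = 2 * real CARD('n) * (r\<^sup>2+1+h)\<^sup>2 + 8 * r\<^sup>2" by (simp add: a_def)
  have "Cn h 6 M = (\<Sum>i\<in>UNIV. GG a 3 ((M$i)\<^sup>2))" using Cn_formula[OF M, of 6 h] by (simp add: a_def)
  also have "\<dots> = (\<Sum>i\<in>UNIV. 2*a^3 + 24*a*(M$i)\<^sup>2)" using GG_123(3)[OF a0 t] by simp
  also have "\<dots> = 2 * real CARD('n) * a^3 + 24 * a * r\<^sup>2"
    by (simp add: sum.distrib sum_distrib_left[symmetric] sumt)
  finally show "Cn h 6 M = 2 * real CARD('n) * (r\<^sup>2+1+h)^3 + 24 * (r\<^sup>2+1+h) * r\<^sup>2" by (simp add: a_def)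
qed

lemma pw0: "pw b 0 = 1"
  by (simp add: pw_def powr_def)

lemma Cn_0: fixes M M' :: "real^'n" shows "Cn h 0 M = Cn h 0 M'"
  unfolding Cn_def by (simp add: pw0)

lemma sig_pos:
  fixes m :: real
  assumes "m < 0 \<or> (1 < m \<and> m < 2) \<or> 3 < m"
  shows "1 * (m*(m-1)*(m-2)*(m-3)) > 0"
proof -
  have "m*(m-1)*(m-2)*(m-3) = (m*(m-1)) * ((m-2)*(m-3))" by (simp add: algebra_simps)
  moreover have "(m*(m-1)) > 0" "((m-2)*(m-3)) > 0" using assms
    by (auto simp: zero_less_mult_iff)
  ultimately show ?thesis by (metis mult_1 mult_pos_pos)
qed

lemma sig_neg:
  fixes m :: real
  assumes "(0 < m \<and> m < 1) \<or> (2 < m \<and> m < 3)"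
  shows "-1 * (m*(m-1)*(m-2)*(m-3)) > 0"
proof -
  have "m*(m-1)*(m-2)*(m-3) = (m*(m-1)) * ((m-2)*(m-3))" by (simp add: algebra_simps)
  moreover have "(m*(m-1)) * ((m-2)*(m-3)) < 0" using assms
    by (auto simp: mult_less_0_iff zero_less_mult_iff)
  ultimately show ?thesis by simp
qed

theorem theorem6p2:
  fixes r h :: real
  assumes n2: "CARD('n) \<ge> 2"
    and r: "r > 0" and h: "h \<ge> 0"
  shows
    "(\<forall>lam::real. lam < 0 \<longrightarrow>
        argmin_on (Cn h lam) (dom_pts r h :: (real ^ 'n) set) = D_pts r
      \<and> (\<not> (h = 0 \<and> r = 1) \<longrightarrow> argmax_on (Cn h lam) (dom_pts r h :: (real ^ 'n) set) = E_pts r)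
      \<and> (h = 0 \<and> r = 1 \<longrightarrow> \<not> bdd_above (Cn h lam ` (dom_pts r h :: (real ^ 'n) set))))
   \<and> (\<forall>lam::real. (\<forall>M\<in>sphere (0 :: real ^ 'n) r. \<forall>M'\<in>sphere (0 :: real ^ 'n) r.
          Cn h lam M = Cn h lam M') \<longleftrightarrow> lam \<in> {0, 2, 4, 6})
   \<and> (\<forall>lam::real. (0 < lam \<and> lam < 2) \<or> (4 < lam \<and> lam < 6) \<longrightarrow>
        argmax_on (Cn h lam) (sphere (0 :: real ^ 'n) r) = D_pts r
      \<and> argmin_on (Cn h lam) (sphere (0 :: real ^ 'n) r) = E_pts r)
   \<and> (\<forall>lam::real. 2 < lam \<and> lam < 4 \<longrightarrow>
        argmin_on (Cn h lam) (sphere (0 :: real ^ 'n) r) = D_pts r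
      \<and> argmax_on (Cn h lam) (sphere (0 :: real ^ 'n) r) = E_pts r)
   \<and> (\<forall>lam::real. 6 < lam \<longrightarrow>
        argmax_on (Cn h lam) (sphere (0 :: real ^ 'n) r) = E_pts r
      \<and> argmin_on (Cn h lam) (sphere (0 :: real ^ 'n) r) = D_pts r)"
proof -
  have P1: "\<forall>lam::real. lam < 0 \<longrightarrow>
        argmin_on (Cn h lam) (dom_pts r h :: (real ^ 'n) set) = D_pts r
      \<and> (\<not> (h = 0 \<and> r = 1) \<longrightarrow> argmax_on (Cn h lam) (dom_pts r h :: (real ^ 'n) set) = E_pts r)
      \<and> (h = 0 \<and> r = 1 \<longrightarrow> \<not> bdd_above (Cn h lam ` (dom_pts r h :: (real ^ 'n) set)))"
  proof (intro allI impI conjI)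
    fix lam :: real assume lam: "lam < 0"
    define m where "m = lam/2"
    have lm: "lam = 2*m" by (simp add: m_def)
    have es: "1 * (m*(m-1)*(m-2)*(m-3)) > 0" using lam by (intro sig_pos) (simp add: m_def)
    have m0: "m \<noteq> 0" using lam by (simp add: m_def)
    have dm: "\<And>M i. M \<in> (dom_pts r h :: (real^'n) set) \<Longrightarrow> (M$i)\<^sup>2 < (r\<^sup>2+1+h)\<^sup>2/4 \<or> m > 0"
      using dom_sq by blast
    show "argmin_on (Cn h lam) (dom_pts r h :: (real ^ 'n) set) = D_pts r"
      unfolding lm by (rule res_D(1)[OF n2 r h es m0 D_dom[OF n2 r h] dom_sub dm]) simp_all
    show "argmax_on (Cn h lam) (dom_pts r h :: (real ^ 'n) set) = E_pts r" if ns: "\<not> (h = 0 \<and> r = 1)"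
    proof -
      have Es: "E_pts r \<subseteq> (dom_pts r h :: (real ^ 'n) set)"
        using E_sphere[OF r] sphere_dom[OF r h ns] by blast
      show ?thesis unfolding lm
        by (rule res_E(1)[OF r h es m0 Es dom_sub]) (use a_ge(2)[OF r h ns] in auto)
    qed
    show "\<not> bdd_above (Cn h lam ` (dom_pts r h :: (real ^ 'n) set))" if "h = 0 \<and> r = 1"
      using unbdd[OF n2 lam] that by simp
  qed
  have P3: "\<forall>lam::real. (0 < lam \<and> lam < 2) \<or> (4 < lam \<and> lam < 6) \<longrightarrow>
        argmax_on (Cn h lam) (sphere (0 :: real ^ 'n) r) = D_pts r
      \<and> argmin_on (Cn h lam) (sphere (0 :: real ^ 'n) r) = E_pts r"
  proof (intro allI impI conjI)
    fix lam :: real assume lam: "(0 < lam \<and> lam < 2) \<or> (4 < lam \<and> lam < 6)"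
    define m where "m = lam/2"
    have lm: "lam = 2*m" by (simp add: m_def)
    have es: "-1 * (m*(m-1)*(m-2)*(m-3)) > 0" using lam by (intro sig_neg) (auto simp: m_def)
    have m0: "m \<noteq> 0" "m > 0" using lam by (auto simp: m_def)
    show "argmax_on (Cn h lam) (sphere (0 :: real ^ 'n) r) = D_pts r"
      unfolding lm by (rule res_D(2)[OF n2 r h es m0(1)]) (use D_sphere[OF r] m0 in auto)
    show "argmin_on (Cn h lam) (sphere (0 :: real ^ 'n) r) = E_pts r"
      unfolding lm by (rule res_E(2)[OF r h es m0(1)]) (use E_sphere[OF r] m0 in auto)
  qed
  have P4: "\<forall>lam::real. 2 < lam \<and> lam < 4 \<longrightarrow>
        argmin_on (Cn h lam) (sphere (0 :: real ^ 'n) r) = D_pts r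
      \<and> argmax_on (Cn h lam) (sphere (0 :: real ^ 'n) r) = E_pts r"
  proof (intro allI impI conjI)
    fix lam :: real assume lam: "2 < lam \<and> lam < 4"
    define m where "m = lam/2"
    have lm: "lam = 2*m" by (simp add: m_def)
    have es: "1 * (m*(m-1)*(m-2)*(m-3)) > 0" using lam by (intro sig_pos) (auto simp: m_def)
    have m0: "m \<noteq> 0" "m > 0" using lam by (auto simp: m_def)
    show "argmin_on (Cn h lam) (sphere (0 :: real ^ 'n) r) = D_pts r"
      unfolding lm by (rule res_D(1)[OF n2 r h es m0(1)]) (use D_sphere[OF r] m0 in auto)
    show "argmax_on (Cn h lam) (sphere (0 :: real ^ 'n) r) = E_pts r"
      unfolding lm by (rule res_E(1)[OF r h es m0(1)]) (use E_sphere[OF r] m0 in auto)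
  qed
  have P5: "\<forall>lam::real. 6 < lam \<longrightarrow>
        argmax_on (Cn h lam) (sphere (0 :: real ^ 'n) r) = E_pts r
      \<and> argmin_on (Cn h lam) (sphere (0 :: real ^ 'n) r) = D_pts r"
  proof (intro allI impI conjI)
    fix lam :: real assume lam: "6 < lam"
    define m where "m = lam/2"
    have lm: "lam = 2*m" by (simp add: m_def)
    have es: "1 * (m*(m-1)*(m-2)*(m-3)) > 0" using lam by (intro sig_pos) (auto simp: m_def)
    have m0: "m \<noteq> 0" "m > 0" using lam by (auto simp: m_def)
    show "argmin_on (Cn h lam) (sphere (0 :: real ^ 'n) r) = D_pts r"
      unfolding lm by (rule res_D(1)[OF n2 r h es m0(1)]) (use D_sphere[OF r] m0 in auto)
    show "argmax_on (Cn h lam) (sphere (0 :: real ^ 'n) r) = E_pts r"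
      unfolding lm by (rule res_E(1)[OF r h es m0(1)]) (use E_sphere[OF r] m0 in auto)
  qed
  have P2: "\<forall>lam::real. (\<forall>M\<in>sphere (0 :: real ^ 'n) r. \<forall>M'\<in>sphere (0 :: real ^ 'n) r.
          Cn h lam M = Cn h lam M') \<longleftrightarrow> lam \<in> {0, 2, 4, 6}"
  proof (intro allI iffI)
    fix lam :: real
    assume l: "lam \<in> {0, 2, 4, 6}"
    show "\<forall>M\<in>sphere (0 :: real ^ 'n) r. \<forall>M'\<in>sphere (0 :: real ^ 'n) r. Cn h lam M = Cn h lam M'"
    proof (intro ballI)
      fix M M' :: "real^'n" assume M: "M \<in> sphere 0 r" and M': "M' \<in> sphere 0 r"
      note c1 = Cn_const[OF r h M] and c2 = Cn_const[OF r h M']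
      from l have "lam = 0 \<or> lam = 2 \<or> lam = 4 \<or> lam = 6" by simp
      thus "Cn h lam M = Cn h lam M'"
      proof (elim disjE)
        assume "lam = 0" thus ?thesis using Cn_0[of h M M'] by simp
      next
        assume "lam = 2" thus ?thesis using c1(1) c2(1) by simp
      next
        assume "lam = 4" thus ?thesis using c1(2) c2(2) by simp
      next
        assume "lam = 6" thus ?thesis using c1(3) c2(3) by simp
      qed
    qed
  next
    fix lam :: real
    assume const: "\<forall>M\<in>sphere (0 :: real ^ 'n) r. \<forall>M'\<in>sphere (0 :: real ^ 'n) r. Cn h lam M = Cn h lam M'"
    show "lam \<in> {0, 2, 4, 6}"
    proof (rule ccontr)
      assume nl: "lam \<notin> {0, 2, 4, 6}"
      obtain i j :: 'n where ij: "i \<noteq> j" using two_idx[OF n2] by blast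
      define M1 :: "real^'n" where "M1 = (\<chi> k. r / sqrt (real CARD('n)))"
      have M1D: "M1 \<in> D_pts r" by (simp add: M1_def D_pts_def)
      have M1dom: "M1 \<in> dom_pts r h" using D_dom[OF n2 r h] M1D by blast
      have M1s: "M1 \<in> sphere 0 r" using M1dom dom_sub by blast
      define M2 :: "real^'n" where "M2 = vec2 i j (3*r/5) (4*r/5)"
      have "(3*r/5)\<^sup>2 + (4*r/5)\<^sup>2 = r\<^sup>2" by (simp add: power2_eq_square field_simps)
      hence M2s: "M2 \<in> sphere 0 r" using sphere_iff[OF r, of M2] vec2_sum[OF ij] by (simp add: M2_def)
      have hr: "2*r \<le> r\<^sup>2+1+h" by (rule r_half(1)[OF r h])
      have "\<bar>M2$k\<bar> < (r\<^sup>2+1+h)/2" for k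
        unfolding M2_def by (rule vec2_abs) (use r hr in auto)
      hence M2dom: "M2 \<in> dom_pts r h" by (intro in_dom[OF M2s])
      have M2D: "M2 \<notin> D_pts r"
      proof
        assume "M2 \<in> D_pts r"
        hence "(M2$i)\<^sup>2 = (M2$j)\<^sup>2" using D_iff[OF r, of M2] by simp
        moreover have "M2$i = 3*r/5" "M2$j = 4*r/5" using ij by (auto simp: M2_def vec2_def)
        ultimately have e: "(3*r/5)\<^sup>2 = (4*r/5)\<^sup>2" by simp
        have "(3*r/5)\<^sup>2 = 9/25 * r\<^sup>2" "(4*r/5)\<^sup>2 = 16/25 * r\<^sup>2" by (simp_all add: power2_eq_square)
        moreover have "r\<^sup>2 > 0" using r by simp
        ultimately show False using e by linarith
      qed
      have eq: "Cn h lam M1 = Cn h lam M2" using const M1s M2s by blast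
      have ne: "lam \<noteq> 0" "lam \<noteq> 2" "lam \<noteq> 4" "lam \<noteq> 6" using nl by auto
      have "lam < 0 \<or> (0 < lam \<and> lam < 2) \<or> (4 < lam \<and> lam < 6) \<or> (2 < lam \<and> lam < 4) \<or> 6 < lam"
      proof (cases "lam < 0")
        case False note f0 = this
        show ?thesis
        proof (cases "lam < 2")
          case True thus ?thesis using f0 ne by auto
        next
          case False note f2 = this
          show ?thesis
          proof (cases "lam < 4")
            case True thus ?thesis using f2 ne by auto
          next
            case False thus ?thesis using ne by auto
          qed
        qed
      qed simp
      thus False
      proof (elim disjE)
        assume "lam < 0"
        hence "argmin_on (Cn h lam) (dom_pts r h :: (real ^ 'n) set) = D_pts r" using P1 by simp
        thus False using distinct_min[OF _ M1D M2dom M2D] eq by simp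
      next
        assume "0 < lam \<and> lam < 2"
        hence "argmax_on (Cn h lam) (sphere (0 :: real ^ 'n) r) = D_pts r" using P3 by simp
        thus False using distinct_max[OF _ M1D M2s M2D] eq by simp
      next
        assume "4 < lam \<and> lam < 6"
        hence "argmax_on (Cn h lam) (sphere (0 :: real ^ 'n) r) = D_pts r" using P3 by simp
        thus False using distinct_max[OF _ M1D M2s M2D] eq by simp
      next
        assume "2 < lam \<and> lam < 4"
        hence "argmin_on (Cn h lam) (sphere (0 :: real ^ 'n) r) = D_pts r" using P4 by simp
        thus False using distinct_min[OF _ M1D M2s M2D] eq by simp
      next
        assume "6 < lam"
        hence "argmin_on (Cn h lam) (sphere (0 :: real ^ 'n) r) = D_pts r" using P5 by simp
        thus False using distinct_min[OF _ M1D M2s M2D] eq by simp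
      qed
    qed
  qed
  show ?thesis using P1 P2 P3 P4 P5 by blast
qed

end
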